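(* Let $X$ be a separable metric space, $g$ a Hausdorff function and $E\subseteq X$. Then $\underline{\mathcal P}^g_0(E)=0$ if and only if $\underline{\mathcal B}^g_0(E)=0$.
   Context: In a metric space $(X,d)$: $\operatorname{gap}F=\inf\{d(x,y):x,y\in F,x\neq y\}$, $C_\delta(E)=\sup\{|F|:F\subseteq E,\operatorname{gap}F>\delta\}$. A Hausdorff function is a nondecreasing $g:(0,\infty)\to(0,\infty)$. A scale is a set $\Delta\subseteq(0,\infty)$ with $0$ in its closure. A packing is a family $\pi=\{(x_i,r_i):i\in I\}\subseteq X\times(0,\infty)$ with $d(x_i,x_j)>r_i$ for all $i\ne j$; it is a packing of $E$ if all $x_i\in E$, $\Delta$-valued if all $r_i\in\Delta$, $\delta$-fine if all $r_i\le\delta$; $g(\pi)=\sum_ig(r_i)$. $\mathcal P^g_{\Delta,0}(E)=\inf_{\delta>0}\sup\{g(\pi):\pi$ a $\Delta$-valued $\delta$-fine packing of $E\}$; $\underline{\mathcal P}^g_0(E)=\inf_\Delta\mathcal P^g_{\Delta,0}(E)$ (infimum over all scales); $\underline{\mathcal B}^g_0(E)=\liminf_{\delta\to0}C_\delta(E)g(\delta)$. *)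

theory Defs
  imports "HOL-Analysis.Analysis"
begin

definition ecard :: "'a set \<Rightarrow> ennreal" where
  "ecard F = (if finite F then of_nat (card F) else top)"

text \<open>gap F = inf of distances between distinct points (inf of the empty set is \<infinity>).\<close>
definition gap :: "'a::metric_space set \<Rightarrow> ennreal" where
  "gap F = (INF p \<in> {(x, y). x \<in> F \<and> y \<in> F \<and> x \<noteq> y}. ennreal (dist (fst p) (snd p)))"

definition C_delta :: "'a::metric_space set \<Rightarrow> real \<Rightarrow> ennreal" where
  "C_delta E \<delta> = (SUP F \<in> {F. F \<subseteq> E \<and> ennreal \<delta> < gap F}. ecard F)"

definition hausdorff_function :: "(real \<Rightarrow> real) \<Rightarrow> bool" where
  "hausdorff_function g \<longleftrightarrow> mono_on {0<..} g \<and> (\<forall>t>0. g t > 0)"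

definition scale :: "real set \<Rightarrow> bool" where
  "scale \<Delta> \<longleftrightarrow> \<Delta> \<subseteq> {0<..} \<and> 0 \<in> closure \<Delta>"

text \<open>A packing, represented as the set of its pairs (centre, radius). Since the
  condition forces distinct indices to have distinct centres, this is the same as an
  indexed family.\<close>
definition packing :: "('a::metric_space \<times> real) set \<Rightarrow> bool" where
  "packing P \<longleftrightarrow> (\<forall>p\<in>P. snd p > 0) \<and>
     (\<forall>p\<in>P. \<forall>q\<in>P. p \<noteq> q \<longrightarrow> dist (fst p) (fst q) > snd p)"

definition packing_of :: "('a::metric_space \<times> real) set \<Rightarrow> 'a set \<Rightarrow> bool" where
  "packing_of P E \<longleftrightarrow> packing P \<and> fst ` P \<subseteq> E"

definition gsum :: "(real \<Rightarrow> real) \<Rightarrow> ('a \<times> real) set \<Rightarrow> ennreal" where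
  "gsum g P = (\<Sum>\<^sub>\<infinity>p\<in>P. ennreal (g (snd p)))"

definition packing_premeasure0 :: "(real \<Rightarrow> real) \<Rightarrow> real set \<Rightarrow> 'a::metric_space set \<Rightarrow> ennreal" where
  "packing_premeasure0 g \<Delta> E =
     (INF \<delta> \<in> {0<..}. SUP P \<in> {P. packing_of P E \<and> snd ` P \<subseteq> \<Delta> \<and> (\<forall>p\<in>P. snd p \<le> \<delta>)}.
        gsum g P)"

definition lower_packing_premeasure0 :: "(real \<Rightarrow> real) \<Rightarrow> 'a::metric_space set \<Rightarrow> ennreal" where
  "lower_packing_premeasure0 g E = (INF \<Delta> \<in> {\<Delta>. scale \<Delta>}. packing_premeasure0 g \<Delta> E)"

definition lower_box0 :: "(real \<Rightarrow> real) \<Rightarrow> 'a::metric_space set \<Rightarrow> ennreal" where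
  "lower_box0 g E = Liminf (at_right 0) (\<lambda>\<delta>. C_delta E \<delta> * ennreal (g \<delta>))"

end

theory Submission
  imports Defs
begin

lemma gap_dist:
  assumes "ennreal r < gap F" "x \<in> F" "y \<in> F" "x \<noteq> y" "0 \<le> r"
  shows "r < dist x y"
proof -
  have "gap F \<le> ennreal (dist x y)"
    unfolding gap_def by (rule INF_lower2[of "(x,y)"]) (use assms in auto)
  with assms(1) have "ennreal r < ennreal (dist x y)" by order
  with assms(5) show ?thesis by (simp add: ennreal_less_iff)
qed

lemma single_packing:
  fixes F :: "'a::metric_space set"
  assumes "F \<subseteq> E" "ennreal r < gap F" "0 < r" "g r > 0"
  shows "packing_of ((\<lambda>x. (x,r)) ` F) E"
    and "gsum g ((\<lambda>x. (x,r)) ` F) = ecard F * ennreal (g r)"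
proof -
  show "packing_of ((\<lambda>x. (x,r)) ` F) E"
    unfolding packing_of_def packing_def using assms gap_dist[OF assms(2)] by auto
  have inj: "inj_on (\<lambda>x. (x,r)) F" by (auto simp: inj_on_def)
  have "gsum g ((\<lambda>x. (x,r)) ` F) = infsum (\<lambda>_. ennreal (g r)) F"
    unfolding gsum_def by (subst infsum_reindex[OF inj]) (simp add: o_def)
  also have "\<dots> = ecard F * ennreal (g r)"
  proof (cases "finite F")
    case True then show ?thesis by (simp add: ecard_def)
  next
    case False
    have "infsum (\<lambda>_. ennreal (g r)) F = \<infinity>"
      by (rule infsum_superconst_infinite_ennreal[where b="ennreal (g r)"]) (use assms False in auto)
    then show ?thesis using False assms by (simp add: ecard_def)
  qed
  finally show "gsum g ((\<lambda>x. (x,r)) ` F) = ecard F * ennreal (g r)" .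
qed

lemma box_small:
  assumes "lower_box0 g E = 0" "y > 0" "\<eta> > 0"
  shows "\<exists>x. 0 < x \<and> x < \<eta> \<and> C_delta E x * ennreal (g x) < y"
proof (rule ccontr)
  assume H: "\<not> ?thesis"
  have "eventually (\<lambda>x. 0 < x \<and> x < \<eta>) (at_right (0::real))"
    using assms(3) eventually_at_right_field by blast
  then have ev: "eventually (\<lambda>x. y \<le> C_delta E x * ennreal (g x)) (at_right (0::real))"
    by eventually_elim (use H in force)
  have "y \<le> lower_box0 g E"
    unfolding lower_box0_def by (rule Liminf_bounded[OF ev])
  with assms show False by simp
qed

lemma dir1:
  fixes E :: "'a::metric_space set"
  assumes hg: "hausdorff_function g" and LP: "lower_packing_premeasure0 g E = 0"
  shows "lower_box0 g E = 0"
proof -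
  have "lower_box0 g E \<le> y" if y: "0 < y" for y
  proof -
    from LP y have "(INF \<Delta> \<in> {\<Delta>. scale \<Delta>}. packing_premeasure0 g \<Delta> E) < y"
      by (simp add: lower_packing_premeasure0_def)
    then obtain \<Delta> where sc: "scale \<Delta>" and "packing_premeasure0 g \<Delta> E < y"
      by (auto simp: INF_less_iff)
    then obtain \<delta>0 where d0: "\<delta>0 > 0" and
      S0: "(SUP P \<in> {P. packing_of P E \<and> snd ` P \<subseteq> \<Delta> \<and> (\<forall>p\<in>P. snd p \<le> \<delta>0)}. gsum g P) < y"
      unfolding packing_premeasure0_def by (auto simp: INF_less_iff)
    let ?S = "(SUP P \<in> {P. packing_of P E \<and> snd ` P \<subseteq> \<Delta> \<and> (\<forall>p\<in>P. snd p \<le> \<delta>0)}. gsum g P)"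
    have hr: "C_delta E r * ennreal (g r) \<le> ?S" if r: "r \<in> \<Delta>" "r \<le> \<delta>0" for r
    proof -
      have rpos: "r > 0" using sc r unfolding scale_def by auto
      have gpos: "g r > 0" using hg rpos unfolding hausdorff_function_def by auto
      have "C_delta E r * ennreal (g r) = (SUP F \<in> {F. F \<subseteq> E \<and> ennreal r < gap F}. ecard F * ennreal (g r))"
        unfolding C_delta_def by (rule SUP_mult_right_ennreal)
      also have "\<dots> \<le> ?S"
      proof (rule SUP_least)
        fix F assume F: "F \<in> {F. F \<subseteq> E \<and> ennreal r < gap F}"
        note sp = single_packing[of F E r g]
        have "ecard F * ennreal (g r) = gsum g ((\<lambda>x. (x,r)) ` F)"
          using sp F rpos gpos by auto
        also have "\<dots> \<le> ?S"
          by (rule SUP_upper) (use sp F rpos gpos r in auto)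
        finally show "ecard F * ennreal (g r) \<le> ?S" .
      qed
      finally show ?thesis .
    qed
    show ?thesis
      unfolding lower_box0_def
    proof (rule Liminf_least)
      fix P assume "eventually P (at_right (0::real))"
      then obtain b where b: "b > 0" "\<And>x. x > 0 \<Longrightarrow> x < b \<Longrightarrow> P x"
        by (auto simp: eventually_at_right_field)
      have "0 \<in> closure \<Delta>" using sc by (simp add: scale_def)
      then obtain r where r: "r \<in> \<Delta>" "dist r 0 < min b \<delta>0"
      proof -
        from \<open>0 \<in> closure \<Delta>\<close> have "\<exists>y\<in>\<Delta>. dist y 0 < min b \<delta>0"
          using b d0 unfolding closure_approachable
          by (metis min_less_iff_conj)
        then show ?thesis using that by blast
      qed
      have rpos: "r > 0" using sc r unfolding scale_def by auto
      have "(INF x\<in>Collect P. C_delta E x * ennreal (g x)) \<le> C_delta E r * ennreal (g r)"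
        by (rule INF_lower) (use b rpos r in auto)
      also have "\<dots> \<le> ?S" using hr r rpos by auto
      also have "\<dots> \<le> y" using S0 by simp
      finally show "(INF x\<in>Collect P. C_delta E x * ennreal (g x)) \<le> y" .
    qed
  qed
  then show ?thesis by (metis dense_ge le_zero_eq)
qed


lemma geom_le1: "(\<Sum>n<M. (1/2::real)^Suc n) = 1 - (1/2)^M"
  by (induction M) (auto simp: field_simps)

lemma card_radius_le:
  fixes S :: "('a::metric_space \<times> real) set"
  assumes P: "packing_of P E" and S: "finite S" "S \<subseteq> P"
  shows "of_nat (card {p\<in>S. snd p = r}) \<le> C_delta E r"
proof -
  define T where "T = {p\<in>S. snd p = r}"
  define F where "F = fst ` T"
  have inj: "inj_on fst T" unfolding T_def by (auto simp: inj_on_def prod_eq_iff)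
  have cT: "card F = card T" unfolding F_def by (rule card_image[OF inj])
  have finF: "finite F" unfolding F_def T_def using S by auto
  have FE: "F \<subseteq> E" using P S unfolding F_def T_def packing_of_def by auto
  have gapF: "ennreal r < gap F"
  proof (cases "{(x, y). x \<in> F \<and> y \<in> F \<and> x \<noteq> y} = {}")
    case True
    have "gap F = top" unfolding gap_def by (simp only: True INF_empty)
    then show ?thesis by simp
  next
    case False
    let ?Q = "{(x, y). x \<in> F \<and> y \<in> F \<and> x \<noteq> y}"
    have finQ: "finite ?Q" by (rule finite_subset[of _ "F \<times> F"]) (use finF in auto)
    have "\<forall>z \<in> (\<lambda>p. ennreal (dist (fst p) (snd p))) ` ?Q. ennreal r < z"
    proof
      fix z assume "z \<in> (\<lambda>p. ennreal (dist (fst p) (snd p))) ` ?Q"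
      then obtain x y where xy: "x \<in> F" "y \<in> F" "x \<noteq> y" and z: "z = ennreal (dist x y)" by auto
      from xy obtain p q where pq: "p \<in> T" "q \<in> T" "x = fst p" "y = fst q" unfolding F_def by auto
      have "p \<noteq> q" using pq xy by auto
      moreover have "p \<in> P" "q \<in> P" using pq S unfolding T_def by auto
      ultimately have "dist x y > snd p" "snd p > 0" using P pq unfolding packing_of_def packing_def by auto
      moreover have "snd p = r" using pq unfolding T_def by auto
      ultimately show "ennreal r < z" using z by (simp add: ennreal_less_iff)
    qed
    then show ?thesis unfolding gap_def using finQ False
      by (subst finite_less_Inf_iff) auto
  qed
  have "ecard F \<le> C_delta E r"
    unfolding C_delta_def by (rule SUP_upper) (use FE gapF in auto)
  then show ?thesis using cT finF unfolding ecard_def T_def by simp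
qed

lemma dir2:
  fixes E :: "'a::metric_space set"
  assumes LB: "lower_box0 g E = 0"
  shows "lower_packing_premeasure0 g E = 0"
proof -
  have "lower_packing_premeasure0 g E \<le> y" if y: "0 < y" for y
  proof -
    define w where "w n = y * ennreal ((1/2::real)^Suc n)" for n
    have wpos: "w n > 0" for n using y unfolding w_def by (simp add: ennreal_zero_less_mult_iff)
    have "\<forall>n. \<exists>x. 0 < x \<and> x < 1 / real (Suc n) \<and> C_delta E x * ennreal (g x) < w n"
      using box_small[OF LB wpos] by simp
    then obtain d where d: "\<And>n. 0 < d n" "\<And>n. d n < 1 / real (Suc n)"
      "\<And>n. C_delta E (d n) * ennreal (g (d n)) < w n"
      by metis
    define \<Delta> where "\<Delta> = range d"
    have sc: "scale \<Delta>"
      unfolding scale_def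
    proof
      show "\<Delta> \<subseteq> {0<..}" using d unfolding \<Delta>_def by auto
      show "0 \<in> closure \<Delta>" unfolding closure_approachable
      proof (intro allI impI)
        fix e :: real assume "e > 0"
        then obtain n where n: "inverse (real (Suc n)) < e" using reals_Archimedean by blast
        have "1 / real (Suc n) < e" using n by (simp add: inverse_eq_divide)
        then have "dist (d n) 0 < e" using d(1)[of n] d(2)[of n] by simp
        then show "\<exists>x\<in>\<Delta>. dist x 0 < e" unfolding \<Delta>_def by blast
      qed
    qed
    define nr where "nr r = (SOME n. d n = r)" for r
    have nr: "d (nr r) = r" if "r \<in> \<Delta>" for r
      using that unfolding \<Delta>_def nr_def by (metis (mono_tags) imageE someI)
    have "gsum g P \<le> y" if P: "packing_of P E" "snd ` P \<subseteq> \<Delta>" for P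
      unfolding gsum_def
    proof (rule infsum_le_finite_sums)
      show "(\<lambda>p. ennreal (g (snd p))) summable_on P" by (rule nonneg_summable_on_complete) simp
      fix S assume S: "finite S" "S \<subseteq> P"
      have "(\<Sum>p\<in>S. ennreal (g (snd p))) = (\<Sum>r\<in>snd ` S. \<Sum>p\<in>{p\<in>S. snd p = r}. ennreal (g (snd p)))"
        by (rule sum.image_gen[OF S(1)])
      also have "\<dots> = (\<Sum>r\<in>snd ` S. of_nat (card {p\<in>S. snd p = r}) * ennreal (g r))"
        by (rule sum.cong) auto
      also have "\<dots> \<le> (\<Sum>r\<in>snd ` S. w (nr r))"
      proof (rule sum_mono)
        fix r assume r: "r \<in> snd ` S"
        then have rD: "r \<in> \<Delta>" using S P by auto
        have "of_nat (card {p\<in>S. snd p = r}) * ennreal (g r) \<le> C_delta E r * ennreal (g r)"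
          by (rule mult_right_mono[OF card_radius_le[OF P(1) S]]) simp
        also have "\<dots> \<le> w (nr r)" using d(3)[of "nr r"] nr[OF rD] by simp
        finally show "of_nat (card {p\<in>S. snd p = r}) * ennreal (g r) \<le> w (nr r)" .
      qed
      also have "\<dots> = (\<Sum>n\<in>nr ` snd ` S. w n)"
      proof (rule sum.reindex[symmetric, unfolded o_def])
        show "inj_on nr (snd ` S)"
          by (rule inj_on_inverseI[where g=d]) (use S P nr in auto)
      qed
      also have "\<dots> \<le> (\<Sum>n<Suc (Max (nr ` snd ` S)). w n)"
      proof (rule sum_mono2)
        show "nr ` snd ` S \<subseteq> {..<Suc (Max (nr ` snd ` S))}"
        proof
          fix n assume "n \<in> nr ` snd ` S"
          then have "n \<le> Max (nr ` snd ` S)" using S(1) by (intro Max_ge) auto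
          then show "n \<in> {..<Suc (Max (nr ` snd ` S))}" by simp
        qed
      qed auto
      also have "\<dots> = y * (\<Sum>n<Suc (Max (nr ` snd ` S)). ennreal ((1/2::real)^Suc n))"
        unfolding w_def by (rule sum_distrib_left[symmetric])
      also have "\<dots> = y * ennreal (\<Sum>n<Suc (Max (nr ` snd ` S)). (1/2::real)^Suc n)"
        by (subst sum_ennreal) auto
      also have "\<dots> \<le> y * ennreal 1"
        by (rule mult_left_mono) (simp_all only: geom_le1 ennreal_leI zero_le, auto intro!: ennreal_leI)
      finally show "(\<Sum>p\<in>S. ennreal (g (snd p))) \<le> y" by simp
    qed
    then have "packing_premeasure0 g \<Delta> E \<le> y"
      unfolding packing_premeasure0_def
      by (intro INF_lower2[of 1] SUP_least) auto
    moreover have "lower_packing_premeasure0 g E \<le> packing_premeasure0 g \<Delta> E"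
      unfolding lower_packing_premeasure0_def by (rule INF_lower) (use sc in auto)
    ultimately show ?thesis by order
  qed
  then show ?thesis by (metis dense_ge le_zero_eq)
qed

theorem proposition2p11:
  fixes g :: "real \<Rightarrow> real" and E :: "'a::metric_space set"
  assumes "separable_space (euclidean :: 'a topology)"
    and "hausdorff_function g"
  shows "lower_packing_premeasure0 g E = 0 \<longleftrightarrow> lower_box0 g E = 0"
  using dir1[OF assms(2)] dir2 by blast

end
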